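(* Consider an execution of the Adaptive Algorithm. Suppose that at some point an unmatched position $p_j$ and an applicant $a_i$ interview each other and the revealed values satisfy $\epsilon^A_{ij}\ge 0$ and $\epsilon^P_{ji}\ge 0$. Then the algorithm (tentatively) matches $a_i$ and $p_j$ to each other in the next iteration, and afterwards $p_j$ interviews only applicants $a_{i'}$ with $i'<\max(i,j+1)$.
   Context: Model. Let $A=\{a_1,\dots,a_n\}$ be a set of applicants and $P=\{p_1,\dots,p_n\}$ a set of positions. Each applicant $a_i$ has a publicly known value $u_i\in\mathbb R$ and each position $p_j$ a publicly known value $v_j\in\mathbb R$, indexed so that $u_1\ge u_2\ge\dots\ge u_n$ and $v_1\ge v_2\ge\dots\ge v_n$. The random variables $\epsilon^A_{ij}$, $\epsilon^P_{ji}$ ($i,j\in[n]$) are mutually independent and identically distributed according to a known distribution symmetric about $0$ (mean zero). The utility of $a_i$ for $p_j$ is $v_j+\epsilon^A_{ij}$ and the utility of $p_j$ for $a_i$ is $u_i+\epsilon^P_{ji}$; the values $\epsilon^A_{ij},\epsilon^P_{ji}$ become known only when $a_i$ and $p_j$ interview each other. The observed utility $v^o_{ij}$ of $a_i$ for $p_j$ equals $v_j+\epsilon^A_{ij}$ if $a_i,p_j$ have interviewed and $v_j$ otherwise; $u^o_{ji}$ is defined symmetrically ($u_i+\epsilon^P_{ji}$ or $u_i$). Write $p_j\succ_{a_i}p_{j'}$ iff $v^o_{ij}>v^o_{ij'}$ and $a_i\succ_{p_j}a_{i'}$ iff $u^o_{ji}>u^o_{ji'}$ (ties broken in favor of the smaller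 index); every agent prefers any partner to being unmatched. For a matching $\mu$, $\mu(x)$ denotes the partner of $x$ ($\emptyset$ if unmatched). Adaptive Algorithm. Initially all agents are unmatched and $v^o_{ij}=v_j$, $u^o_{ji}=u_i$ for all $i,j$. For an unmatched applicant $a$, let $\beta(a)$ be $a$'s most preferred position (w.r.t. current observed utilities) that has not yet rejected $a$. While some applicant is unmatched: let $j^*$ be the smallest index such that $\beta(a_i)=p_{j^*}$ for some unmatched $a_i$; let $a_{i^*}$ be $p_{j^*}$'s favorite applicant among $\{a_i:\beta(a_i)=p_{j^*},\mu(a_i)=\emptyset\}$. If $a_{i^*},p_{j^*}$ have not interviewed and ($i^*\le j^*$ or $a_{i^*}\succ_{p_{j^*}}\mu(p_{j^*})$), then they interview and $v^o_{i^*j^*},u^o_{j^*i^*}$ are updated. Otherwise: if $\mu(p_{j^*})\succ_{p_{j^*}}a_{i^*}$, then $p_{j^*}$ rejects $a_{i^*}$; else $p_{j^*}$ rejects $\mu(p_{j^*})$ (if nonempty) and $a_{i^*},p_{j^*}$ become matched. When all applicants are matched, output $\mu$. *)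

theory Defs
  imports Complex_Main
begin

text \<open>Applicants and positions are indexed 0..n-1 (the paper uses 1..n; all index
comparisons used by the algorithm and the claim are invariant under the uniform shift).\<close>

record market =
  N    :: nat                       \<comment> \<open>number of applicants = number of positions\<close>
  uA   :: "nat \<Rightarrow> real"
  vP   :: "nat \<Rightarrow> real"
  epsA :: "nat \<Rightarrow> nat \<Rightarrow> real"
  epsP :: "nat \<Rightarrow> nat \<Rightarrow> real"

record state =
  mA   :: "nat \<Rightarrow> nat option"
  intv :: "(nat \<times> nat) set"          \<comment> \<open>(i,j): a_i and p_j have interviewed\<close>
  rej  :: "(nat \<times> nat) set"          \<comment> \<open>(i,j): p_j has rejected a_i\<close>

definition vo :: "market \<Rightarrow> state \<Rightarrow> nat \<Rightarrow> nat \<Rightarrow> real" where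
  "vo M s i j = vP M j + (if (i,j) \<in> intv s then epsA M i j else 0)"

definition uo :: "market \<Rightarrow> state \<Rightarrow> nat \<Rightarrow> nat \<Rightarrow> real" where
  "uo M s j i = uA M i + (if (i,j) \<in> intv s then epsP M j i else 0)"

definition prefA :: "market \<Rightarrow> state \<Rightarrow> nat \<Rightarrow> nat \<Rightarrow> nat \<Rightarrow> bool" where
  "prefA M s i j j' \<longleftrightarrow> vo M s i j > vo M s i j' \<or> (vo M s i j = vo M s i j' \<and> j < j')"

definition prefP :: "market \<Rightarrow> state \<Rightarrow> nat \<Rightarrow> nat \<Rightarrow> nat \<Rightarrow> bool" where
  "prefP M s j i i' \<longleftrightarrow> uo M s j i > uo M s j i' \<or> (uo M s j i = uo M s j i' \<and> i < i')"

definition muP :: "market \<Rightarrow> state \<Rightarrow> nat \<Rightarrow> nat option" where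
  "muP M s j = (if \<exists>i < N M. mA s i = Some j
                then Some (LEAST i. i < N M \<and> mA s i = Some j) else None)"

definition unmatched :: "market \<Rightarrow> state \<Rightarrow> nat set" where
  "unmatched M s = {i. i < N M \<and> mA s i = None}"

definition beta :: "market \<Rightarrow> state \<Rightarrow> nat \<Rightarrow> nat option" where
  "beta M s i = (let C = {j. j < N M \<and> (i,j) \<notin> rej s} in
     if C = {} then None
     else Some (THE j. j \<in> C \<and> (\<forall>j'\<in>C. j' \<noteq> j \<longrightarrow> prefA M s i j j')))"

definition favP :: "market \<Rightarrow> state \<Rightarrow> nat \<Rightarrow> nat set \<Rightarrow> nat" where
  "favP M s j C = (THE i. i \<in> C \<and> (\<forall>i'\<in>C. i' \<noteq> i \<longrightarrow> prefP M s j i i'))"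

datatype action = Stop | Interview nat nat | Reject nat nat | Match nat nat

definition act :: "market \<Rightarrow> state \<Rightarrow> action" where
  "act M s = (let U = unmatched M s; J = {j. \<exists>i\<in>U. beta M s i = Some j} in
     if U = {} \<or> J = {} then Stop
     else let j = (LEAST j. j \<in> J);
              C = {i \<in> U. beta M s i = Some j};
              i = favP M s j C;
              better = (case muP M s j of None \<Rightarrow> True | Some i' \<Rightarrow> prefP M s j i i');
              worse = (case muP M s j of None \<Rightarrow> False | Some i' \<Rightarrow> prefP M s j i' i)
          in if (i,j) \<notin> intv s \<and> (i \<le> j \<or> better) then Interview i j
             else if worse then Reject i j
             else Match i j)"

definition step :: "market \<Rightarrow> state \<Rightarrow> state" where
  "step M s = (case act M s of
      Stop \<Rightarrow> s
    | Interview i j \<Rightarrow> s\<lparr>intv := insert (i,j) (intv s)\<rparr>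
    | Reject i j \<Rightarrow> s\<lparr>rej := insert (i,j) (rej s)\<rparr>
    | Match i j \<Rightarrow> (case muP M s j of
          None \<Rightarrow> s\<lparr>mA := (mA s)(i := Some j)\<rparr>
        | Some i' \<Rightarrow> s\<lparr>mA := (mA s)(i' := None, i := Some j),
                       rej := insert (i',j) (rej s)\<rparr>))"

definition init :: state where
  "init = \<lparr>mA = (\<lambda>_. None), intv = {}, rej = {}\<rparr>"

definition run :: "market \<Rightarrow> nat \<Rightarrow> state" where
  "run M t = (step M ^^ t) init"

end

theory Submission imports Defs begin

lemma max_exists:
  assumes "finite C" "C \<noteq> {}"
    and tot: "\<And>a b. a \<noteq> b \<Longrightarrow> R a b \<or> R b a"
    and tr: "\<And>a b c. R a b \<Longrightarrow> R b c \<Longrightarrow> R a c"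
  shows "\<exists>x\<in>C. \<forall>y\<in>C. y \<noteq> x \<longrightarrow> R x y"
  using assms(1,2)
proof (induction C rule: finite_ne_induct)
  case (singleton x) then show ?case by auto
next
  case (insert a F)
  then obtain x where x: "x \<in> F" "\<forall>y\<in>F. y \<noteq> x \<longrightarrow> R x y" by auto
  show ?case
  proof (cases "R a x")
    case True
    then show ?thesis using x tr by (intro bexI[of _ a]) auto
  next
    case False
    then have "a \<noteq> x \<Longrightarrow> R x a" using tot by blast
    then show ?thesis using x by (intro bexI[of _ x]) auto
  qed
qed

lemma the_max:
  assumes asym: "\<And>a b. R a b \<Longrightarrow> \<not> R b a"
    and "x \<in> C" "\<forall>y\<in>C. y \<noteq> x \<longrightarrow> R x y"
  shows "(THE x. x \<in> C \<and> (\<forall>y\<in>C. y \<noteq> x \<longrightarrow> R x y)) = x"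
proof (rule the_equality)
  show "x \<in> C \<and> (\<forall>y\<in>C. y \<noteq> x \<longrightarrow> R x y)" using assms(2,3) by blast
  fix z assume z: "z \<in> C \<and> (\<forall>y\<in>C. y \<noteq> z \<longrightarrow> R z y)"
  show "z = x"
  proof (rule ccontr)
    assume "z \<noteq> x"
    then have "R z x" "R x z" using z assms(2,3) by auto
    then show False using asym by blast
  qed
qed

lemma prefP_tot: "a \<noteq> b \<Longrightarrow> prefP M s j a b \<or> prefP M s j b a"
  unfolding prefP_def by auto
lemma prefP_tr: "prefP M s j a b \<Longrightarrow> prefP M s j b c \<Longrightarrow> prefP M s j a c"
  unfolding prefP_def by auto
lemma prefP_asym: "prefP M s j a b \<Longrightarrow> \<not> prefP M s j b a"
  unfolding prefP_def by auto
lemma prefA_tot: "a \<noteq> b \<Longrightarrow> prefA M s j a b \<or> prefA M s j b a"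
  unfolding prefA_def by auto
lemma prefA_tr: "prefA M s j a b \<Longrightarrow> prefA M s j b c \<Longrightarrow> prefA M s j a c"
  unfolding prefA_def by auto
lemma prefA_asym: "prefA M s j a b \<Longrightarrow> \<not> prefA M s j b a"
  unfolding prefA_def by auto

lemma favP_mem:
  assumes "finite C" "C \<noteq> {}"
  shows "favP M s j C \<in> C \<and> (\<forall>y\<in>C. y \<noteq> favP M s j C \<longrightarrow> prefP M s j (favP M s j C) y)"
proof -
  have tot: "\<And>a b. a \<noteq> b \<Longrightarrow> prefP M s j a b \<or> prefP M s j b a" by (rule prefP_tot)
  have tr: "\<And>a b c. prefP M s j a b \<Longrightarrow> prefP M s j b c \<Longrightarrow> prefP M s j a c" by (rule prefP_tr)
  obtain x where x: "x\<in>C" "\<forall>y\<in>C. y \<noteq> x \<longrightarrow> prefP M s j x y"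
  proof -
    have "\<exists>x\<in>C. \<forall>y\<in>C. y \<noteq> x \<longrightarrow> prefP M s j x y"
      apply (rule max_exists[where R="prefP M s j"])
      apply (rule assms(1)) apply (rule assms(2)) apply (erule prefP_tot) apply (erule (1) prefP_tr) done
    then show ?thesis using that by blast
  qed
  have "favP M s j C = x" unfolding favP_def
    by (rule the_max[of "prefP M s j" x C, OF prefP_asym x])
  then show ?thesis using x by simp
qed

lemma favP_eq:
  assumes "x\<in>C" "\<forall>y\<in>C. y \<noteq> x \<longrightarrow> prefP M s j x y"
  shows "favP M s j C = x"
  unfolding favP_def by (rule the_max[of "prefP M s j" x C, OF prefP_asym assms])

lemma beta_eq:
  assumes "x \<in> {j. j < N M \<and> (i,j) \<notin> rej s}"
    "\<forall>y\<in>{j. j < N M \<and> (i,j) \<notin> rej s}. y \<noteq> x \<longrightarrow> prefA M s i x y"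
  shows "beta M s i = Some x"
proof -
  have "(THE x. x \<in> {j. j < N M \<and> (i,j) \<notin> rej s} \<and> (\<forall>y\<in>{j. j < N M \<and> (i,j) \<notin> rej s}. y \<noteq> x \<longrightarrow> prefA M s i x y)) = x"
    by (rule the_max[of "prefA M s i" x, OF prefA_asym assms])
  then show ?thesis unfolding beta_def Let_def using assms(1) by auto
qed

lemma beta_Some:
  assumes "beta M s i = Some x"
  shows "x \<in> {j. j < N M \<and> (i,j) \<notin> rej s} \<and>
    (\<forall>y\<in>{j. j < N M \<and> (i,j) \<notin> rej s}. y \<noteq> x \<longrightarrow> prefA M s i x y)"
proof -
  let ?C = "{j. j < N M \<and> (i,j) \<notin> rej s}"
  have ne: "?C \<noteq> {}" using assms unfolding beta_def Let_def by (auto split: if_splits)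
  have tot: "\<And>a b. a \<noteq> b \<Longrightarrow> prefA M s i a b \<or> prefA M s i b a" by (rule prefA_tot)
  have tr: "\<And>a b c. prefA M s i a b \<Longrightarrow> prefA M s i b c \<Longrightarrow> prefA M s i a c" by (rule prefA_tr)
  have fin: "finite ?C" by (rule finite_subset[of _ "{..<N M}"]) auto
  obtain z where z: "z\<in>?C" "\<forall>y\<in>?C. y \<noteq> z \<longrightarrow> prefA M s i z y"
  proof -
    have "\<exists>x\<in>?C. \<forall>y\<in>?C. y \<noteq> x \<longrightarrow> prefA M s i x y"
      apply (rule max_exists[where R="prefA M s i"])
      apply (rule fin) apply (rule ne) apply (erule prefA_tot) apply (erule (1) prefA_tr) done
    then show ?thesis using that by blast
  qed
  have "beta M s i = Some z" using beta_eq[OF z] .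
  then show ?thesis using assms z by simp
qed

lemma act_nonstop:
  assumes "act M s = Interview a b \<or> act M s = Reject a b \<or> act M s = Match a b"
  shows "unmatched M s \<noteq> {} \<and> {j. \<exists>i\<in>unmatched M s. beta M s i = Some j} \<noteq> {} \<and>
     b = (LEAST j. j \<in> {j. \<exists>i\<in>unmatched M s. beta M s i = Some j}) \<and>
     a = favP M s b {i \<in> unmatched M s. beta M s i = Some b}"
  using assms unfolding act_def Let_def by (auto split: if_splits)


lemma act_Interview_cond:
  "act M s = Interview a b \<Longrightarrow> (a,b) \<notin> intv s \<and>
     (a \<le> b \<or> (case muP M s b of None \<Rightarrow> True | Some i' \<Rightarrow> prefP M s b a i'))"
  unfolding act_def Let_def by (auto split: if_splits option.splits)

lemma act_Match_cond:
  "act M s = Match a b \<Longrightarrow>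
     \<not> (case muP M s b of None \<Rightarrow> False | Some i' \<Rightarrow> prefP M s b i' a)"
  unfolding act_def Let_def by (auto split: if_splits option.splits)

lemma act_mem:
  assumes "act M s = Interview a b \<or> act M s = Reject a b \<or> act M s = Match a b"
  shows "a \<in> unmatched M s \<and> beta M s a = Some b \<and>
    (\<forall>y\<in>{i \<in> unmatched M s. beta M s i = Some b}. y \<noteq> a \<longrightarrow> prefP M s b a y)"
proof -
  note h = act_nonstop[OF assms]
  let ?J = "{j. \<exists>i\<in>unmatched M s. beta M s i = Some j}"
  let ?C = "{i \<in> unmatched M s. beta M s i = Some b}"
  have "b \<in> ?J" using h LeastI_ex[of "\<lambda>j. j \<in> ?J"] by auto
  then have ne: "?C \<noteq> {}" by auto
  have tot: "\<And>a b. a \<noteq> b \<Longrightarrow> prefA M s i a b \<or> prefA M s i b a" by (rule prefA_tot)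
  have tr: "\<And>a b c. prefA M s i a b \<Longrightarrow> prefA M s i b c \<Longrightarrow> prefA M s i a c" by (rule prefA_tr)
  have fin: "finite ?C" by (rule finite_subset[of _ "{..<N M}"]) (auto simp: unmatched_def)
  have fm: "favP M s b ?C \<in> ?C \<and> (\<forall>y\<in>?C. y \<noteq> favP M s b ?C \<longrightarrow> prefP M s b (favP M s b ?C) y)"
    by (rule favP_mem[OF fin ne])
  have a: "a = favP M s b ?C" using h by blast
  show ?thesis using fm unfolding a[symmetric] by blast
qed

lemma act_unfold:
  assumes "unmatched M s \<noteq> {}" "{j. \<exists>i\<in>unmatched M s. beta M s i = Some j} \<noteq> {}"
    "(LEAST j. j \<in> {j. \<exists>i\<in>unmatched M s. beta M s i = Some j}) = jj"
    "favP M s jj {i \<in> unmatched M s. beta M s i = Some jj} = ii"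
  shows "act M s = (if (ii,jj) \<notin> intv s \<and> (ii \<le> jj \<or> (case muP M s jj of None \<Rightarrow> True | Some i' \<Rightarrow> prefP M s jj ii i'))
     then Interview ii jj else if (case muP M s jj of None \<Rightarrow> False | Some i' \<Rightarrow> prefP M s jj i' ii)
     then Reject ii jj else Match ii jj)"
proof -
  have e: "(unmatched M s = {} \<or> {j. \<exists>i\<in>unmatched M s. beta M s i = Some j} = {}) = False"
    using assms(1,2) by blast
  show ?thesis unfolding act_def Let_def e if_False assms(3) assms(4) ..
qed

lemma first_step:
  assumes act: "act M s = Interview i j" and mu: "muP M s j = None"
    and eA: "epsA M i j \<ge> 0" and eP: "epsP M j i \<ge> 0"
  shows "act M (s\<lparr>intv := insert (i,j) (intv s)\<rparr>) = Match i j"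
proof -
  define s' where "s' = s\<lparr>intv := insert (i,j) (intv s)\<rparr>"
  note h = act_nonstop[of M s i j] act
  note m = act_mem[of M s i j] act
  have ni: "(i,j) \<notin> intv s" using act_Interview_cond[OF act] by simp
  have U: "unmatched M s' = unmatched M s" by (simp add: s'_def unmatched_def)
  have MU: "muP M s' = muP M s" by (simp add: s'_def muP_def fun_eq_iff)
  have B: "beta M s' = beta M s"
  proof
    fix a
    show "beta M s' a = beta M s a"
    proof (cases "a = i")
      case True
      have bi: "beta M s i = Some j" using m by auto
      note bs = beta_Some[OF bi]
      have "beta M s' i = Some j"
      proof (rule beta_eq)
        show "j \<in> {j. j < N M \<and> (i, j) \<notin> rej s'}" using bs by (simp add: s'_def)
        show "\<forall>y\<in>{j. j < N M \<and> (i, j) \<notin> rej s'}. y \<noteq> j \<longrightarrow> prefA M s' i j y"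
        proof (intro ballI impI)
          fix y assume y: "y \<in> {j. j < N M \<and> (i, j) \<notin> rej s'}" "y \<noteq> j"
          then have "prefA M s i j y" using bs by (simp add: s'_def)
          then show "prefA M s' i j y" using y(2) ni eA
            unfolding prefA_def vo_def s'_def by (auto split: if_splits)
        qed
      qed
      then show ?thesis using True bi by simp
    next
      case False
      have "prefA M s' a = prefA M s a"
        using False by (auto simp: prefA_def vo_def s'_def fun_eq_iff)
      moreover have "rej s' = rej s" by (simp add: s'_def)
      ultimately show ?thesis unfolding beta_def Let_def by simp
    qed
  qed
  have F: "favP M s' j {i \<in> unmatched M s. beta M s i = Some j} = i"
  proof (rule favP_eq)
    show "i \<in> {i \<in> unmatched M s. beta M s i = Some j}" using m by auto
    show "\<forall>y\<in>{i \<in> unmatched M s. beta M s i = Some j}. y \<noteq> i \<longrightarrow> prefP M s' j i y"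
    proof (intro ballI impI)
      fix y assume y: "y \<in> {i \<in> unmatched M s. beta M s i = Some j}" "y \<noteq> i"
      then have "prefP M s j i y" using m by auto
      then show "prefP M s' j i y" using y(2) ni eP
        unfolding prefP_def uo_def s'_def by (auto split: if_splits)
    qed
  qed
  have L: "(LEAST j. j \<in> {j. \<exists>i\<in>unmatched M s. beta M s i = Some j}) = j" using h by auto
  have I: "(i,j) \<in> intv s'" by (simp add: s'_def)
  have "act M s' = Match i j"
    apply (subst act_unfold[of M s' j i])
    using h U MU B F L I mu by simp_all
  then show ?thesis by (simp add: s'_def)
qed


definition Uniq :: "market \<Rightarrow> state \<Rightarrow> bool" where
  "Uniq M s \<longleftrightarrow> (\<forall>a b c. a < N M \<longrightarrow> b < N M \<longrightarrow> mA s a = Some c \<longrightarrow> mA s b = Some c \<longrightarrow> a = b)"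

definition Dom :: "market \<Rightarrow> nat \<Rightarrow> nat \<Rightarrow> state \<Rightarrow> bool" where
  "Dom M i j s \<longleftrightarrow> (\<exists>m<N M. mA s m = Some j \<and>
     (uo M s j m > uA M i \<or> (uo M s j m = uA M i \<and> m \<le> i)))"

lemma muP_uniq:
  assumes "Uniq M s" "m < N M" "mA s m = Some j"
  shows "muP M s j = Some m"
proof -
  have "(LEAST i. i < N M \<and> mA s i = Some j) = m"
    by (rule Least_equality) (use assms in \<open>auto simp: Uniq_def\<close>)
  then show ?thesis unfolding muP_def using assms by auto
qed

lemma muP_Some:
  assumes "muP M s j = Some x" shows "x < N M \<and> mA s x = Some j"
proof -
  have ex: "\<exists>i < N M. mA s i = Some j" using assms unfolding muP_def by (auto split: if_splits)
  then have "x = (LEAST i. i < N M \<and> mA s i = Some j)" using assms unfolding muP_def by auto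
  then show ?thesis using LeastI_ex[of "\<lambda>i. i < N M \<and> mA s i = Some j"] ex by auto
qed

lemma muP_None:
  assumes "muP M s j = None" shows "\<forall>x<N M. mA s x \<noteq> Some j"
  using assms unfolding muP_def by (auto split: if_splits)

lemma uniq_step:
  assumes U: "Uniq M s" shows "Uniq M (step M s)"
proof (cases "act M s")
  case Stop then show ?thesis using U by (simp add: step_def)
next
  case (Interview a b) then show ?thesis using U by (simp add: step_def Uniq_def)
next
  case (Reject a b) then show ?thesis using U by (simp add: step_def Uniq_def)
next
  case (Match a b)
  have am: "a < N M" "mA s a = None" using act_mem[of M s a b] Match by (auto simp: unmatched_def)
  show ?thesis
  proof (cases "muP M s b")
    case None
    note nb = muP_None[OF None]
    show ?thesis using Match None U nb am unfolding step_def Uniq_def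
      by (auto split: if_splits)
  next
    case (Some i')
    note sb = muP_Some[OF Some]
    show ?thesis using Match Some U sb am unfolding step_def Uniq_def
      by (auto split: if_splits)
  qed
qed

lemma uniq_run: "Uniq M (run M t)"
proof (induction t)
  case 0 then show ?case by (simp add: run_def init_def Uniq_def)
next
  case (Suc t)
  have "run M (Suc t) = step M (run M t)" by (simp add: run_def)
  then show ?case using uniq_step[OF Suc] by simp
qed

lemma dom_step:
  assumes U: "Uniq M s" and D: "Dom M i j s" shows "Dom M i j (step M s)"
proof -
  obtain m where m: "m < N M" "mA s m = Some j"
     "uo M s j m > uA M i \<or> (uo M s j m = uA M i \<and> m \<le> i)" using D unfolding Dom_def by blast
  show ?thesis
  proof (cases "act M s")
    case Stop then show ?thesis using D by (simp add: step_def)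
  next
    case (Interview a b)
    have "mA s a = None" using act_mem[of M s a b] Interview by (auto simp: unmatched_def)
    then have "a \<noteq> m" using m by auto
    then have "uo M (step M s) j m = uo M s j m" using Interview by (simp add: step_def uo_def)
    moreover have "mA (step M s) = mA s" using Interview by (simp add: step_def)
    ultimately show ?thesis using m unfolding Dom_def by auto
  next
    case (Reject a b)
    have "uo M (step M s) j m = uo M s j m" using Reject by (simp add: step_def uo_def)
    moreover have "mA (step M s) = mA s" using Reject by (simp add: step_def)
    ultimately show ?thesis using m unfolding Dom_def by auto
  next
    case (Match a b)
    have am: "a < N M" "mA s a = None" using act_mem[of M s a b] Match by (auto simp: unmatched_def)
    have uo_eq: "uo M (step M s) = uo M s" using Match
      by (simp add: step_def uo_def fun_eq_iff split: option.splits)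
    show ?thesis
    proof (cases "b = j")
      case True
      have mu: "muP M s j = Some m" by (rule muP_uniq[OF U m(1,2)])
      have nw: "\<not> prefP M s j m a" using act_Match_cond[OF Match] mu True by simp
      have "a \<noteq> m" using am m by auto
      then have pa: "prefP M s j a m" using prefP_tot[of a m M s j] nw by blast
      have st: "mA (step M s) a = Some j" using Match mu True by (simp add: step_def)
      have "uo M s j a > uA M i \<or> (uo M s j a = uA M i \<and> a \<le> i)"
        using pa m(3) unfolding prefP_def by auto
      then show ?thesis unfolding Dom_def uo_eq using st am by auto
    next
      case False
      have "mA (step M s) m = Some j"
      proof (cases "muP M s b")
        case None
        have "m \<noteq> a" using m am by auto
        then show ?thesis using Match None False m am by (simp add: step_def)
      next
        case (Some i')
        have "mA s i' = Some b" using muP_Some[OF Some] by simp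
        then have "i' \<noteq> m" using m False by auto
        moreover have "m \<noteq> a" using m am by auto
        ultimately show ?thesis using Match Some False m am by (simp add: step_def)
      qed
      then show ?thesis unfolding Dom_def uo_eq using m by auto
    qed
  qed
qed


lemma run_Suc: "run M (Suc t) = step M (run M t)" by (simp add: run_def)

theorem claim2p2:
  fixes M :: market and t i j :: nat
  assumes u_sorted: "\<forall>a b. a \<le> b \<longrightarrow> b < N M \<longrightarrow> uA M b \<le> uA M a"
    and v_sorted: "\<forall>a b. a \<le> b \<longrightarrow> b < N M \<longrightarrow> vP M b \<le> vP M a"
    and interview: "act M (run M t) = Interview i j"
    and unmatched_pos: "muP M (run M t) j = None"
    and epsA_nonneg: "epsA M i j \<ge> 0"
    and epsP_nonneg: "epsP M j i \<ge> 0"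
  shows "act M (run M (Suc t)) = Match i j \<and>
         (\<forall>t' > t. \<forall>i'. act M (run M t') = Interview i' j \<longrightarrow> i' < max i (j + 1))"
proof -
  define s where "s = run M t"
  have s1: "run M (Suc t) = s\<lparr>intv := insert (i,j) (intv s)\<rparr>"
    using interview by (simp add: run_Suc s_def step_def)
  have A1: "act M (run M (Suc t)) = Match i j"
    unfolding s1 by (rule first_step) (use interview unmatched_pos epsA_nonneg epsP_nonneg s_def in auto)
  have im: "i < N M" using act_mem[of M s i j] interview s_def by (auto simp: unmatched_def)
  have mu1: "muP M (run M (Suc t)) j = None"
    using unmatched_pos unfolding s1 s_def by (simp add: muP_def split: if_splits)
  have s2: "run M (Suc (Suc t)) = (run M (Suc t))\<lparr>mA := (mA (run M (Suc t)))(i := Some j)\<rparr>"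
    using A1 mu1 by (simp add: run_Suc[of M "Suc t"] step_def)
  have D2: "Dom M i j (run M (Suc (Suc t)))"
  proof -
    have "mA (run M (Suc (Suc t))) i = Some j" using s2 by simp
    moreover have "(i,j) \<in> intv (run M (Suc (Suc t)))" using s2 s1 by simp
    ultimately show ?thesis unfolding Dom_def uo_def using im epsP_nonneg
      by (intro exI[of _ i]) auto
  qed
  have Dk: "Dom M i j (run M (Suc (Suc t) + k))" for k
  proof (induction k)
    case 0 then show ?case using D2 by simp
  next
    case (Suc k)
    have "run M (Suc (Suc t) + Suc k) = step M (run M (Suc (Suc t) + k))"
      using run_Suc[of M "Suc (Suc t) + k"] by simp
    then show ?case using dom_step[OF uniq_run Suc] by simp
  qed
  have P2: "i' < max i (j + 1)" if tt: "t' > t" and ai: "act M (run M t') = Interview i' j" for t' i'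
  proof -
    have "t' \<noteq> Suc t" using A1 ai by auto
    then obtain k where k: "t' = Suc (Suc t) + k" using tt by (metis add_Suc less_imp_Suc_add Suc_lessI)
    let ?r = "run M t'"
    obtain m where m: "m < N M" "mA ?r m = Some j"
       "uo M ?r j m > uA M i \<or> (uo M ?r j m = uA M i \<and> m \<le> i)"
      using Dk[of k] k unfolding Dom_def by blast
    have mu: "muP M ?r j = Some m" by (rule muP_uniq[OF uniq_run m(1,2)])
    have c: "(i',j) \<notin> intv ?r" "i' \<le> j \<or> prefP M ?r j i' m"
      using act_Interview_cond[OF ai] mu by auto
    have i'N: "i' < N M" using act_mem[of M ?r i' j] ai by (auto simp: unmatched_def)
    show ?thesis
    proof (cases "i' \<le> j")
      case True then show ?thesis by simp
    next
      case False
      then have p: "prefP M ?r j i' m" using c by simp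
      have uo': "uo M ?r j i' = uA M i'" using c(1) by (simp add: uo_def)
      have "i' < i"
      proof (rule ccontr)
        assume ni: "\<not> i' < i"
        then have "uA M i' \<le> uA M i" using u_sorted i'N by auto
        then show False using p uo' m(3) ni unfolding prefP_def by auto
      qed
      then show ?thesis by simp
    qed
  qed
  show ?thesis using A1 P2 by blast
qed

end
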